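(* For any finite poset $P$ of dimension $2$, either $sat^*([k]^2,P)=O(1)$ or $sat^*([k]^2,P)=\Theta(k)$ (as $k\to\infty$).
   Context: $[k]^2$ is ordered coordinatewise. The dimension of a poset $P$ is the least $d$ such that there are $d$ linear orders (permutations) $\pi_1,\dots,\pi_d$ of $P$ with $p<_Pq$ iff $\pi_i(p)<\pi_i(q)$ for all $i$. For posets $P,R$, $P$ is a strong subposet of $R$ if there is an injection $i:P\to R$ with $p\le_P p'\iff i(p)\le_R i(p')$. A subset $F\subseteq Q$ is strong $P$-saturated if $P$ is not a strong subposet of $F$ but for every $x\in Q\setminus F$, $P$ is a strong subposet of $F\cup\{x\}$. $sat^*(Q,P)$ is the minimum size of a strong $P$-saturated subset of $Q$. *)

theory Defs
  imports Main "HOL-Library.Landau_Symbols"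
begin

definition finite_poset :: "'a set \<Rightarrow> ('a \<Rightarrow> 'a \<Rightarrow> bool) \<Rightarrow> bool" where
  "finite_poset P le \<longleftrightarrow> finite P
     \<and> (\<forall>p\<in>P. le p p)
     \<and> (\<forall>p\<in>P. \<forall>q\<in>P. le p q \<and> le q p \<longrightarrow> p = q)
     \<and> (\<forall>p\<in>P. \<forall>q\<in>P. \<forall>r\<in>P. le p q \<and> le q r \<longrightarrow> le p r)"

definition is_realizer :: "'a set \<Rightarrow> ('a \<Rightarrow> 'a \<Rightarrow> bool) \<Rightarrow> nat \<Rightarrow> (nat \<Rightarrow> 'a \<Rightarrow> nat) \<Rightarrow> bool" where
  "is_realizer P le d \<pi>s \<longleftrightarrow>
     (\<forall>i<d. bij_betw (\<pi>s i) P {0..<card P})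
     \<and> (\<forall>p\<in>P. \<forall>q\<in>P. (le p q \<and> p \<noteq> q) \<longleftrightarrow> (\<forall>i<d. \<pi>s i p < \<pi>s i q))"

definition poset_dim :: "'a set \<Rightarrow> ('a \<Rightarrow> 'a \<Rightarrow> bool) \<Rightarrow> nat" where
  "poset_dim P le = (LEAST d. \<exists>\<pi>s. is_realizer P le d \<pi>s)"

definition grid :: "nat \<Rightarrow> (nat \<times> nat) set" where
  "grid k = {1..k} \<times> {1..k}"

definition grid_le :: "nat \<times> nat \<Rightarrow> nat \<times> nat \<Rightarrow> bool" where
  "grid_le x y \<longleftrightarrow> fst x \<le> fst y \<and> snd x \<le> snd y"

definition strong_subposet :: "'a set \<Rightarrow> ('a \<Rightarrow> 'a \<Rightarrow> bool) \<Rightarrow> (nat \<times> nat) set \<Rightarrow> bool" where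
  "strong_subposet P le F \<longleftrightarrow>
     (\<exists>f. inj_on f P \<and> f ` P \<subseteq> F \<and>
          (\<forall>p\<in>P. \<forall>p'\<in>P. le p p' \<longleftrightarrow> grid_le (f p) (f p')))"

definition strong_saturated :: "(nat \<times> nat) set \<Rightarrow> 'a set \<Rightarrow> ('a \<Rightarrow> 'a \<Rightarrow> bool) \<Rightarrow> (nat \<times> nat) set \<Rightarrow> bool" where
  "strong_saturated Q P le F \<longleftrightarrow> F \<subseteq> Q \<and> \<not> strong_subposet P le F
     \<and> (\<forall>x\<in>Q - F. strong_subposet P le (insert x F))"

definition sat_star :: "nat \<Rightarrow> 'a set \<Rightarrow> ('a \<Rightarrow> 'a \<Rightarrow> bool) \<Rightarrow> nat" where
  "sat_star k P le = (LEAST n. \<exists>F. strong_saturated (grid k) P le F \<and> card F = n)"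

end

theory Submission
  imports Defs
begin


definition contains :: "(nat\<times>nat) set \<Rightarrow> (nat\<times>nat) set \<Rightarrow> bool" where
"contains Pi F \<longleftrightarrow> (\<exists>\<phi>. \<phi> ` Pi \<subseteq> F \<and> (\<forall>u\<in>Pi. \<forall>v\<in>Pi.
   (fst u < fst v \<longrightarrow> fst (\<phi> u) < fst (\<phi> v)) \<and> (snd u < snd v \<longrightarrow> snd (\<phi> u) < snd (\<phi> v))))"

definition blk :: "nat \<Rightarrow> (nat\<times>nat) set \<Rightarrow> nat \<Rightarrow> nat \<Rightarrow> (nat\<times>nat) set" where
"blk t F i j = {p\<in>F. fst p div t = i \<and> snd p div t = j}"

lemma div_bounds: "0 < (t::nat) \<Longrightarrow> x div t = i \<Longrightarrow> t*i \<le> x \<and> x < t*i + t"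
proof -
  assume t: "0 < t" and h: "x div t = i"
  have e: "x = t*i + x mod t" using h by (metis div_mult_mod_eq mult.commute)
  have "x mod t < t" using t by simp
  with e show ?thesis by linarith
qed

lemma div_less_imp_less: "(x::nat) div t < y div t \<Longrightarrow> x < y"
  by (metis div_le_mono not_less)

lemma contains_swap: "contains Pi F \<Longrightarrow> contains (prod.swap ` Pi) (prod.swap ` F)"
proof -
  assume "contains Pi F"
  then obtain \<phi> where h: "\<phi> ` Pi \<subseteq> F" "\<forall>u\<in>Pi. \<forall>v\<in>Pi.
   (fst u < fst v \<longrightarrow> fst (\<phi> u) < fst (\<phi> v)) \<and> (snd u < snd v \<longrightarrow> snd (\<phi> u) < snd (\<phi> v))"
    unfolding contains_def by blast
  show ?thesis unfolding contains_def
    apply (rule exI[of _ "prod.swap \<circ> \<phi> \<circ> prod.swap"])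
    using h by force
qed

lemma contains_swap_iff: "contains (prod.swap ` Pi) (prod.swap ` F) \<longleftrightarrow> contains Pi F"
proof
  assume "contains (prod.swap ` Pi) (prod.swap ` F)"
  from contains_swap[OF this] show "contains Pi F" by (simp add: image_image)
qed (rule contains_swap)

lemma card_le_fibers: "finite (f ` A) \<Longrightarrow> card A \<le> (\<Sum>y\<in>f ` A. card {x\<in>A. f x = y})"
proof -
  assume "finite (f ` A)"
  have "A = (\<Union>y\<in>f ` A. {x\<in>A. f x = y})" by auto
  hence "card A = card (\<Union>y\<in>f ` A. {x\<in>A. f x = y})" by simp
  also have "\<dots> \<le> (\<Sum>y\<in>f ` A. card {x\<in>A. f x = y})" by (rule card_UN_le) fact
  finally show ?thesis .
qed

lemma enum_props:
  assumes "finite I" "card I = n"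
  shows "\<forall>a<n. sorted_list_of_set I ! a \<in> I"
    "\<forall>a a'. a < a' \<longrightarrow> a' < n \<longrightarrow> sorted_list_of_set I ! a < sorted_list_of_set I ! a'"
proof -
  have l: "length (sorted_list_of_set I) = n" using assms by simp
  have s: "set (sorted_list_of_set I) = I" using assms by simp
  show "\<forall>a<n. sorted_list_of_set I ! a \<in> I" using l s nth_mem by blast
  show "\<forall>a a'. a < a' \<longrightarrow> a' < n \<longrightarrow> sorted_list_of_set I ! a < sorted_list_of_set I ! a'"
    using strict_sorted_list_of_set[of I] l unfolding sorted_wrt_iff_nth_less by auto
qed

lemma count_lines:
  assumes "finite A" "snd ` A \<subseteq> {..<m}" "\<forall>j. card {i. (i,j) \<in> A} \<le> K"
  shows "card A \<le> m*K"
proof -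
  have "card A \<le> (\<Sum>j\<in>snd ` A. card {x\<in>A. snd x = j})"
    using assms(1) by (intro card_le_fibers) simp
  also have "\<dots> \<le> (\<Sum>j\<in>snd ` A. K)"
  proof (rule sum_mono)
    fix j
    have "{x\<in>A. snd x = j} = (\<lambda>i. (i,j)) ` {i. (i,j) \<in> A}" by auto
    hence "card {x\<in>A. snd x = j} = card {i. (i,j) \<in> A}"
      by (simp add: card_image inj_on_def)
    thus "card {x\<in>A. snd x = j} \<le> K" using assms(3) by simp
  qed
  also have "\<dots> = card (snd ` A) * K" by simp
  also have "\<dots> \<le> m * K"
    using card_mono[OF _ assms(2)] by simp
  finally show ?thesis .
qed

lemma count_lines2:
  assumes "finite A" "fst ` A \<subseteq> {..<m}" "\<forall>i. card {j. (i,j) \<in> A} \<le> K"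
  shows "card A \<le> m*K"
proof -
  have "card (prod.swap ` A) \<le> m*K"
  proof (rule count_lines)
    show "finite (prod.swap ` A)" using assms(1) by simp
    show "snd ` prod.swap ` A \<subseteq> {..<m}" using assms(2) by (auto simp: image_image)
    show "\<forall>j. card {i. (i, j) \<in> prod.swap ` A} \<le> K"
    proof
      fix j
      have "{i. (i, j) \<in> prod.swap ` A} = {i. (j,i) \<in> A}" by force
      thus "card {i. (i, j) \<in> prod.swap ` A} \<le> K" using assms(3) by simp
    qed
  qed
  thus ?thesis by (simp add: card_image)
qed

lemma wide_count:
  assumes Pi: "Pi \<subseteq> {..<n}\<times>{..<n}" and nc: "\<not> contains Pi F" and t: "0 < t"
    and W: "W \<subseteq> {i. n \<le> card (snd ` blk t F i j)}"
  shows "card W \<le> (n-1) * (t choose n)"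
proof (rule ccontr)
  assume "\<not> ?thesis"
  hence big: "(n-1) * (t choose n) < card W" by simp
  hence finW: "finite W" using card.infinite by fastforce
  define Ss where "Ss = {S. S \<subseteq> {t*j..<t*j+t} \<and> card S = n}"
  have cSs: "card Ss = t choose n" unfolding Ss_def by (subst n_subsets) auto
  have finSs: "finite Ss" unfolding Ss_def by simp
  define g where "g i = (SOME S. S \<subseteq> snd ` blk t F i j \<and> card S = n)" for i
  have g: "g i \<subseteq> snd ` blk t F i j \<and> card (g i) = n" if "i \<in> W" for i
  proof -
    have "n \<le> card (snd ` blk t F i j)" using W that by auto
    then have "\<exists>S. S \<subseteq> snd ` blk t F i j \<and> card S = n"
      by (meson obtain_subset_with_card_n)
    thus ?thesis unfolding g_def by (rule someI_ex)
  qed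
  have sub: "snd ` blk t F i j \<subseteq> {t*j..<t*j+t}" for i
    using div_bounds[OF t] unfolding blk_def by fastforce
  have gW: "g ` W \<subseteq> Ss" unfolding Ss_def using g sub by blast
  have finGW: "finite (g ` W)" using finW by simp
  have "\<exists>S\<in>g ` W. n \<le> card {i\<in>W. g i = S}"
  proof (rule ccontr)
    assume "\<not> ?thesis"
    hence le: "\<forall>S\<in>g ` W. card {i\<in>W. g i = S} \<le> n - 1" by force
    have "card W \<le> (\<Sum>S\<in>g ` W. card {i\<in>W. g i = S})" by (rule card_le_fibers[OF finGW])
    also have "\<dots> \<le> (\<Sum>S\<in>g ` W. n - 1)" by (rule sum_mono) (use le in blast)
    also have "\<dots> = card (g ` W) * (n-1)" by simp
    also have "\<dots> \<le> (t choose n) * (n-1)"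
      using card_mono[OF finSs gW] cSs by simp
    finally show False using big by (simp add: mult.commute)
  qed
  then obtain S where S: "S \<in> g ` W" "n \<le> card {i\<in>W. g i = S}" by blast
  then obtain I where I: "I \<subseteq> {i\<in>W. g i = S}" "card I = n" "finite I"
    by (meson obtain_subset_with_card_n)
  have "S \<in> Ss" using S(1) gW by blast
  hence Sfin: "finite S" "card S = n" unfolding Ss_def by (auto intro: finite_subset)
  define eI where "eI a = sorted_list_of_set I ! a" for a
  define eS where "eS b = sorted_list_of_set S ! b" for b
  note eI = enum_props[OF I(3) I(2), folded eI_def]
  note eS = enum_props[OF Sfin, folded eS_def]
  define \<phi> where "\<phi> u = (SOME p. p \<in> blk t F (eI (fst u)) j \<and> snd p = eS (snd u))" for u
  have phi: "\<phi> u \<in> blk t F (eI (fst u)) j \<and> snd (\<phi> u) = eS (snd u)" if "u \<in> Pi" for u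
  proof -
    have a: "fst u < n" "snd u < n" using that Pi by auto
    have "eI (fst u) \<in> I" using eI(1) a by blast
    hence "g (eI (fst u)) = S" "eI (fst u) \<in> W" using I by auto
    hence "S \<subseteq> snd ` blk t F (eI (fst u)) j" using g by metis
    moreover have "eS (snd u) \<in> S" using eS(1) a by blast
    ultimately obtain p where "p \<in> blk t F (eI (fst u)) j" "snd p = eS (snd u)" by force
    hence "\<exists>p. p \<in> blk t F (eI (fst u)) j \<and> snd p = eS (snd u)" by blast
    thus ?thesis unfolding \<phi>_def by (rule someI_ex)
  qed
  have "contains Pi F" unfolding contains_def
  proof (intro exI conjI ballI)
    show "\<phi> ` Pi \<subseteq> F" using phi unfolding blk_def by auto
    fix u v assume uv: "u \<in> Pi" "v \<in> Pi"
    have a: "fst u < n" "snd u < n" "fst v < n" "snd v < n" using uv Pi by auto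
    show "fst u < fst v \<longrightarrow> fst (\<phi> u) < fst (\<phi> v)"
    proof
      assume "fst u < fst v"
      hence "eI (fst u) < eI (fst v)" using eI(2) a by blast
      hence "fst (\<phi> u) div t < fst (\<phi> v) div t" using phi[OF uv(1)] phi[OF uv(2)]
        unfolding blk_def by auto
      thus "fst (\<phi> u) < fst (\<phi> v)" by (rule div_less_imp_less)
    qed
    show "snd u < snd v \<longrightarrow> snd (\<phi> u) < snd (\<phi> v)"
      using eS(2) a phi[OF uv(1)] phi[OF uv(2)] by auto
  qed
  with nc show False by simp
qed

lemma sum_if_const: "finite A \<Longrightarrow> (\<Sum>x\<in>A. if Q x then (c::nat) else 0) = c * card {x\<in>A. Q x}"
  by (simp add: sum.If_cases Int_def conj_commute)

lemma B_avoid: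
  assumes nc: "\<not> contains Pi F" and t: "0 < t"
  shows "\<not> contains Pi ((\<lambda>p. (fst p div t, snd p div t)) ` F)"
proof
  assume "contains Pi ((\<lambda>p. (fst p div t, snd p div t)) ` F)"
  then obtain \<phi> where h: "\<phi> ` Pi \<subseteq> (\<lambda>p. (fst p div t, snd p div t)) ` F" "\<forall>u\<in>Pi. \<forall>v\<in>Pi.
   (fst u < fst v \<longrightarrow> fst (\<phi> u) < fst (\<phi> v)) \<and> (snd u < snd v \<longrightarrow> snd (\<phi> u) < snd (\<phi> v))"
    unfolding contains_def by blast
  define \<psi> where "\<psi> u = (SOME p. p \<in> F \<and> (fst p div t, snd p div t) = \<phi> u)" for u
  have psi: "\<psi> u \<in> F \<and> (fst (\<psi> u) div t, snd (\<psi> u) div t) = \<phi> u" if "u \<in> Pi" for u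
  proof -
    have "\<exists>p. p \<in> F \<and> (fst p div t, snd p div t) = \<phi> u" using h(1) that by force
    thus ?thesis unfolding \<psi>_def by (rule someI_ex)
  qed
  have "contains Pi F" unfolding contains_def
  proof (intro exI conjI ballI)
    show "\<psi> ` Pi \<subseteq> F" using psi by auto
    fix u v assume uv: "u \<in> Pi" "v \<in> Pi"
    show "fst u < fst v \<longrightarrow> fst (\<psi> u) < fst (\<psi> v)"
    proof
      assume "fst u < fst v"
      hence "fst (\<phi> u) < fst (\<phi> v)" using h(2) uv by blast
      moreover have "fst (\<psi> u) div t = fst (\<phi> u)" "fst (\<psi> v) div t = fst (\<phi> v)"
        using psi[OF uv(1)] psi[OF uv(2)] by (metis fst_conv)+
      ultimately have "fst (\<psi> u) div t < fst (\<psi> v) div t" by simp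
      thus "fst (\<psi> u) < fst (\<psi> v)" by (rule div_less_imp_less)
    qed
    show "snd u < snd v \<longrightarrow> snd (\<psi> u) < snd (\<psi> v)"
    proof
      assume "snd u < snd v"
      hence "snd (\<phi> u) < snd (\<phi> v)" using h(2) uv by blast
      moreover have "snd (\<psi> u) div t = snd (\<phi> u)" "snd (\<psi> v) div t = snd (\<phi> v)"
        using psi[OF uv(1)] psi[OF uv(2)] by (metis snd_conv)+
      ultimately have "snd (\<psi> u) div t < snd (\<psi> v) div t" by simp
      thus "snd (\<psi> u) < snd (\<psi> v)" by (rule div_less_imp_less)
    qed
  qed
  with nc show False by simp
qed

lemma blk_le_tt:
  assumes t: "0 < t" shows "card (blk t F i j) \<le> t*t"
proof -
  have "blk t F i j \<subseteq> {t*i..<t*i+t} \<times> {t*j..<t*j+t}"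
    using div_bounds[OF t] unfolding blk_def by fastforce
  from card_mono[OF _ this] show ?thesis by (simp add: card_cartesian_product)
qed

lemma blk_le_small:
  assumes "finite F" "card (fst ` blk t F i j) < n" "card (snd ` blk t F i j) < n"
  shows "card (blk t F i j) \<le> (n-1)*(n-1)"
proof -
  have fin: "finite (blk t F i j)" using assms(1) unfolding blk_def by simp
  have "blk t F i j \<subseteq> fst ` blk t F i j \<times> snd ` blk t F i j" by force
  from card_mono[OF _ this] fin
  have "card (blk t F i j) \<le> card (fst ` blk t F i j) * card (snd ` blk t F i j)"
    by (simp add: card_cartesian_product)
  also have "\<dots> \<le> (n-1)*(n-1)" using assms(2,3) by (intro mult_le_mono) auto
  finally show ?thesis .
qed

lemma blk_swap: "snd ` blk t (prod.swap ` F) j i = fst ` blk t F i j"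
proof -
  have "blk t (prod.swap ` F) j i = prod.swap ` blk t F i j" unfolding blk_def by force
  thus ?thesis by (simp add: image_image)
qed

lemma MT_step:
  assumes Pi: "Pi \<subseteq> {..<n}\<times>{..<n}" and n: "1 \<le> n" and t: "0 < t"
    and nc: "\<not> contains Pi F" and Fsub: "F \<subseteq> {..<t*m}\<times>{..<t*m}"
  shows "card F \<le> (n-1)*(n-1)*card ((\<lambda>p. (fst p div t, snd p div t)) ` F)
           + t*t*(2*(m*((n-1)*(t choose n))))"
proof -
  define \<beta> where "\<beta> p = (fst p div t, snd p div t)" for p :: "nat\<times>nat"
  define B where "B = \<beta> ` F"
  define K where "K = (n-1)*(t choose n)"
  have finF: "finite F" using Fsub finite_subset by blast
  have finB: "finite B" unfolding B_def using finF by simp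
  have Bsub: "B \<subseteq> {..<m}\<times>{..<m}" unfolding B_def \<beta>_def using Fsub
    by (auto simp: less_mult_imp_div_less mult.commute)
  have fib: "{p\<in>F. \<beta> p = b} = blk t F (fst b) (snd b)" for b
    unfolding blk_def \<beta>_def by (cases b) auto
  define Wd where "Wd = {b\<in>B. n \<le> card (snd ` blk t F (fst b) (snd b))}"
  define Tl where "Tl = {b\<in>B. n \<le> card (fst ` blk t F (fst b) (snd b))}"
  have each: "card (blk t F (fst b) (snd b)) \<le> (n-1)*(n-1)
     + (if n \<le> card (snd ` blk t F (fst b) (snd b)) then t*t else 0)
     + (if n \<le> card (fst ` blk t F (fst b) (snd b)) then t*t else 0)" for b
  proof (cases "n \<le> card (snd ` blk t F (fst b) (snd b)) \<or> n \<le> card (fst ` blk t F (fst b) (snd b))")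
    case True
    have "card (blk t F (fst b) (snd b)) \<le> t*t" by (rule blk_le_tt[OF t])
    thus ?thesis using True by auto
  next
    case False
    hence "card (blk t F (fst b) (snd b)) \<le> (n-1)*(n-1)"
      by (intro blk_le_small[OF finF]) auto
    thus ?thesis by simp
  qed
  have "card F \<le> (\<Sum>b\<in>B. card {p\<in>F. \<beta> p = b})"
    unfolding B_def by (rule card_le_fibers) (simp add: finF)
  also have "\<dots> \<le> (\<Sum>b\<in>B. (n-1)*(n-1)
     + (if n \<le> card (snd ` blk t F (fst b) (snd b)) then t*t else 0)
     + (if n \<le> card (fst ` blk t F (fst b) (snd b)) then t*t else 0))"
    by (rule sum_mono) (unfold fib, rule each)
  also have "\<dots> = (n-1)*(n-1)*card B + t*t*card Wd + t*t*card Tl"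
    unfolding Wd_def Tl_def by (simp add: sum.distrib sum_if_const[OF finB])
  also have "card Wd \<le> m*K"
  proof (rule count_lines)
    show "finite Wd" unfolding Wd_def using finB by simp
    show "snd ` Wd \<subseteq> {..<m}" unfolding Wd_def using Bsub by auto
    show "\<forall>j. card {i. (i, j) \<in> Wd} \<le> K"
    proof
      fix j show "card {i. (i, j) \<in> Wd} \<le> K" unfolding K_def
        by (rule wide_count[OF Pi nc t]) (auto simp: Wd_def)
    qed
  qed
  also have "card Tl \<le> m*K"
  proof (rule count_lines2)
    show "finite Tl" unfolding Tl_def using finB by simp
    show "fst ` Tl \<subseteq> {..<m}" unfolding Tl_def using Bsub by auto
    show "\<forall>i. card {j. (i, j) \<in> Tl} \<le> K"
    proof
      fix i
      have Pi': "prod.swap ` Pi \<subseteq> {..<n}\<times>{..<n}" using Pi by auto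
      have nc': "\<not> contains (prod.swap ` Pi) (prod.swap ` F)" using nc contains_swap_iff by blast
      show "card {j. (i, j) \<in> Tl} \<le> K" unfolding K_def
        by (rule wide_count[OF Pi' nc' t]) (auto simp: Tl_def blk_swap)
    qed
  qed
  finally show ?thesis unfolding B_def \<beta>_def K_def by (simp add: algebra_simps)
qed

lemma MT_pow:
  assumes Pi: "Pi \<subseteq> {..<n}\<times>{..<n}" and n: "1 \<le> n"
  shows "\<forall>F. F \<subseteq> {..<(n*n+1)^j}\<times>{..<(n*n+1)^j} \<longrightarrow> \<not> contains Pi F \<longrightarrow>
            card F \<le> (n*n+1)*(n*n+1)*((n*n+1) choose n) * (n*n+1)^j"
proof (induction j)
  case 0
  have C: "0 < (n*n+1) choose n" by (rule zero_less_binomial) (use le_square[of n] in linarith)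
  show ?case
  proof (intro allI impI)
    fix F :: "(nat\<times>nat) set" assume "F \<subseteq> {..<(n*n+1)^0}\<times>{..<(n*n+1)^0}"
    hence "F \<subseteq> {(0,0)}" by auto
    hence "card F \<le> 1" using card_mono[of "{(0,0)}" F] by simp
    also have "0 < (n*n+1)*(n*n+1)*((n*n+1) choose n)" using C by simp
    hence "1 \<le> (n*n+1)*(n*n+1)*((n*n+1) choose n)" by linarith
    finally show "card F \<le> (n*n+1)*(n*n+1)*((n*n+1) choose n) * (n*n+1)^0" by simp
  qed
next
  case (Suc j)
  define t where "t = n*n+1"
  define m where "m = t^j"
  define C where "C = t choose n"
  have t: "0 < t" unfolding t_def by simp
  show ?case
  proof (intro allI impI)
    fix F :: "(nat\<times>nat) set"
    assume Fs: "F \<subseteq> {..<(n*n+1)^Suc j}\<times>{..<(n*n+1)^Suc j}" and nc: "\<not> contains Pi F"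
    have Fs': "F \<subseteq> {..<t*m}\<times>{..<t*m}" using Fs unfolding t_def m_def by simp
    define B where "B = (\<lambda>p. (fst p div t, snd p div t)) ` F"
    have st: "card F \<le> (n-1)*(n-1)*card B + t*t*(2*(m*((n-1)*C)))"
      unfolding B_def C_def by (rule MT_step[OF Pi n t nc Fs'])
    have Bs: "B \<subseteq> {..<t^j}\<times>{..<t^j}" unfolding B_def m_def[symmetric] using Fs'
      by (auto simp: less_mult_imp_div_less mult.commute)
    have ncB: "\<not> contains Pi B" unfolding B_def by (rule B_avoid[OF nc t])
    have cB: "card B \<le> t*t*C*m" using Suc.IH Bs ncB unfolding t_def C_def m_def by blast
    obtain a where a: "n = a + 1" using n by (metis add.commute le_Suc_ex)
    have ta: "t = a*a + 2*a + 2" unfolding t_def a by (simp add: algebra_simps)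
    have "card F \<le> a*a*(t*t*C*m) + t*t*(2*(m*(a*C)))"
      using st cB a by (metis add_le_mono1 add_diff_cancel_right' le_trans mult_le_mono2)
    also have "\<dots> = t*t*C*m*(a*a+2*a)" by (simp add: algebra_simps)
    also have "\<dots> \<le> t*t*C*m*t" by (intro mult_le_mono2) (simp add: ta)
    finally show "card F \<le> (n*n+1)*(n*n+1)*((n*n+1) choose n) * (n*n+1)^Suc j"
      unfolding t_def C_def m_def by (simp add: algebra_simps)
  qed
qed

lemma pow_between:
  assumes t: "2 \<le> (t::nat)" and K: "1 \<le> K"
  shows "\<exists>j. K \<le> t^j \<and> t^j \<le> t*K"
proof -
  have ex: "K \<le> t^K"
  proof -
    have "K < 2^K" by (rule less_exp)
    also have "\<dots> \<le> t^K" using t by (rule power_mono) simp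
    finally show ?thesis by simp
  qed
  define j where "j = (LEAST j. K \<le> t^j)"
  have j1: "K \<le> t^j" unfolding j_def by (rule LeastI[of _ K]) (rule ex)
  have "t^j \<le> t*K"
  proof (cases j)
    case 0 thus ?thesis using K t by simp
  next
    case (Suc j')
    hence "\<not> K \<le> t^j'" unfolding j_def using not_less_Least[of j' "\<lambda>j. K \<le> t^j"] Suc j_def by auto
    thus ?thesis using Suc by simp
  qed
  with j1 show ?thesis by blast
qed

theorem marcus_tardos:
  assumes Pi: "Pi \<subseteq> {..<n}\<times>{..<n}" and n: "1 \<le> n"
  shows "\<exists>C. \<forall>K F. F \<subseteq> {..<K}\<times>{..<K} \<longrightarrow> \<not> contains Pi F \<longrightarrow> card F \<le> C*K"
proof -
  define t where "t = n*n+1"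
  define D where "D = t*t*(t choose n)"
  have t2: "2 \<le> t" unfolding t_def using n by (simp add: le_square)
  have "\<forall>K F. F \<subseteq> {..<K}\<times>{..<K} \<longrightarrow> \<not> contains Pi F \<longrightarrow> card F \<le> (D*t)*K"
  proof (intro allI impI)
    fix K F assume Fs: "F \<subseteq> {..<K}\<times>{..<K}" and nc: "\<not> contains Pi F"
    show "card F \<le> (D*t)*K"
    proof (cases "K = 0")
      case True thus ?thesis using Fs by simp
    next
      case False
      hence "1 \<le> K" by simp
      then obtain j where j: "K \<le> t^j" "t^j \<le> t*K" using pow_between[OF t2] by blast
      have "F \<subseteq> {..<t^j}\<times>{..<t^j}" using Fs j(1) by fastforce
      hence "card F \<le> D * t^j" using MT_pow[OF Pi n] nc unfolding D_def t_def by blast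
      also have "\<dots> \<le> D*(t*K)" using j(2) by simp
      finally show ?thesis by (simp add: algebra_simps)
    qed
  qed
  thus ?thesis by blast
qed



lemma rank_props:
  fixes key :: "'a \<Rightarrow> nat"
  assumes fin: "finite P" and inj: "inj_on key P"
  shows "bij_betw (\<lambda>p. card {q\<in>P. key q < key p}) P {0..<card P}"
    and "\<forall>p\<in>P. \<forall>q\<in>P. key p < key q \<longrightarrow> card {r\<in>P. key r < key p} < card {r\<in>P. key r < key q}"
proof -
  define rk where "rk p = card {q\<in>P. key q < key p}" for p
  have mono: "rk p < rk q" if "p \<in> P" "q \<in> P" "key p < key q" for p q
  proof -
    have "{r\<in>P. key r < key p} \<subset> {r\<in>P. key r < key q}" using that by auto
    thus ?thesis unfolding rk_def by (rule psubset_card_mono[rotated]) (simp add: fin)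
  qed
  show "\<forall>p\<in>P. \<forall>q\<in>P. key p < key q \<longrightarrow> card {r\<in>P. key r < key p} < card {r\<in>P. key r < key q}"
    using mono unfolding rk_def by blast
  have injr: "inj_on rk P"
  proof (rule inj_onI)
    fix p q assume pq: "p \<in> P" "q \<in> P" "rk p = rk q"
    show "p = q"
    proof (rule ccontr)
      assume "p \<noteq> q"
      hence "key p \<noteq> key q" using inj pq by (auto simp: inj_on_def)
      hence "key p < key q \<or> key q < key p" by arith
      thus False using mono pq by fastforce
    qed
  qed
  have rng: "rk ` P \<subseteq> {0..<card P}"
  proof
    fix x assume "x \<in> rk ` P"
    then obtain p where p: "p \<in> P" "x = rk p" by blast
    have "{q\<in>P. key q < key p} \<subset> P" using p by auto
    hence "rk p < card P" unfolding rk_def by (rule psubset_card_mono[rotated]) (simp add: fin)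
    thus "x \<in> {0..<card P}" using p by simp
  qed
  have "card (rk ` P) = card {0..<card P}" using card_image[OF injr] by simp
  hence "rk ` P = {0..<card P}" using rng by (intro card_subset_eq) auto
  thus "bij_betw (\<lambda>p. card {q\<in>P. key q < key p}) P {0..<card P}"
    using injr unfolding bij_betw_def rk_def by simp
qed

lemma key_less: "(a::nat) < b \<Longrightarrow> x < N \<Longrightarrow> a*N + x < b*N + y"
proof -
  assume "a < b" "x < N"
  have "(a+1)*N \<le> b*N" using \<open>a<b\<close> by (intro mult_right_mono) auto
  thus ?thesis using \<open>x<N\<close> by (simp add: algebra_simps)
qed

lemma realizer_exists:
  assumes po: "finite_poset P le"
  shows "\<exists>d \<pi>s. is_realizer P le d \<pi>s"
proof -
  have fin: "finite P" and refl: "\<forall>p\<in>P. le p p"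
    and antis: "\<forall>p\<in>P. \<forall>q\<in>P. le p q \<and> le q p \<longrightarrow> p = q"
    and trans: "\<forall>p\<in>P. \<forall>q\<in>P. \<forall>r\<in>P. le p q \<and> le q r \<longrightarrow> le p r"
    using po unfolding finite_poset_def by blast+
  define N where "N = card P"
  obtain h where h: "bij_betw h {0..<N} P" using ex_bij_betw_nat_finite[OF fin] N_def by blast
  define e where "e = inv_into {0..<N} h"
  have e: "bij_betw e P {0..<N}" unfolding e_def by (rule bij_betw_inv_into[OF h])
  have he: "h (e p) = p" if "p \<in> P" for p
    unfolding e_def using h that by (simp add: bij_betw_inv_into_right)
  have eN: "e p < N" if "p \<in> P" for p using e that bij_betwE by fastforce
  define ht where "ht p = card {q\<in>P. le q p}" for p
  have htN: "ht p \<le> N" for p unfolding ht_def N_def by (rule card_mono[OF fin]) auto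
  define A where "A y p = (if le p y then 0 else 1) * (N+1) + ht p" for y p
  define key where "key y p = A y p * N + e p" for y p
  have injk: "inj_on (key y) P" for y
  proof (rule inj_onI)
    fix p q assume pq: "p \<in> P" "q \<in> P" "key y p = key y q"
    hence "(A y p * N + e p) mod N = (A y q * N + e q) mod N" unfolding key_def by simp
    hence "e p = e q" using eN[OF pq(1)] eN[OF pq(2)] by simp
    thus "p = q" using he pq by metis
  qed
  have kless: "key y p < key y q" if "p \<in> P" "q \<in> P" "A y p < A y q" for y p q
    unfolding key_def by (rule key_less[OF that(3) eN[OF that(1)]])
  have ord: "key y p < key y q" if "y \<in> P" "p \<in> P" "q \<in> P" "le p q" "p \<noteq> q" for y p q
  proof -
    have "ht p < ht q"
    proof -
      have "{r\<in>P. le r p} \<subset> {r\<in>P. le r q}"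
      proof
        show "{r\<in>P. le r p} \<subseteq> {r\<in>P. le r q}" using trans that by blast
        have "q \<notin> {r\<in>P. le r p}" using antis that by blast
        moreover have "q \<in> {r\<in>P. le r q}" using refl that by blast
        ultimately show "{r\<in>P. le r p} \<noteq> {r\<in>P. le r q}" by blast
      qed
      thus ?thesis unfolding ht_def by (rule psubset_card_mono[rotated]) (simp add: fin)
    qed
    moreover have "le q y \<longrightarrow> le p y" using trans that by blast
    ultimately have "A y p < A y q" unfolding A_def by auto
    thus ?thesis using kless that by blast
  qed
  have sep: "key y y < key y p" if "y \<in> P" "p \<in> P" "\<not> le p y" for y p
  proof -
    have "A y y < A y p" unfolding A_def using that refl htN[of y] by auto
    thus ?thesis using kless that by blast
  qed
  define \<pi>s where "\<pi>s i p = card {q\<in>P. key (h i) q < key (h i) p}" for i p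
  have R: "is_realizer P le N \<pi>s"
    unfolding is_realizer_def
  proof (intro conjI allI impI ballI)
    fix i assume "i < N"
    show "bij_betw (\<pi>s i) P {0..<card P}" unfolding \<pi>s_def
      by (rule rank_props(1)[OF fin injk])
  next
    fix p q assume pq: "p \<in> P" "q \<in> P"
    show "(le p q \<and> p \<noteq> q) = (\<forall>i<N. \<pi>s i p < \<pi>s i q)"
    proof
      assume a: "le p q \<and> p \<noteq> q"
      show "\<forall>i<N. \<pi>s i p < \<pi>s i q"
      proof (intro allI impI)
        fix i assume "i < N"
        hence hi: "h i \<in> P" using h bij_betwE by fastforce
        show "\<pi>s i p < \<pi>s i q" unfolding \<pi>s_def
          using rank_props(2)[OF fin injk] ord[OF hi pq] a pq by blast
      qed
    next
      assume a: "\<forall>i<N. \<pi>s i p < \<pi>s i q"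
      have ei: "e q < N" "h (e q) = q" using eN he pq by auto
      have "\<not> \<pi>s (e q) q < \<pi>s (e q) p \<or> le p q"
      proof (cases "le p q")
        case False
        then show ?thesis using a ei by fastforce
      qed simp
      moreover have "\<not> le p q \<longrightarrow> \<pi>s (e q) q < \<pi>s (e q) p" unfolding \<pi>s_def ei(2)
        using rank_props(2)[OF fin injk] sep[OF pq(2) pq(1)] pq by blast
      ultimately have "le p q" by blast
      moreover have "p \<noteq> q" using a ei by auto
      ultimately show "le p q \<and> p \<noteq> q" by blast
    qed
  qed
  thus ?thesis by blast
qed

lemma dim2_realizer:
  assumes po: "finite_poset P le" and d: "poset_dim P le = 2"
  shows "\<exists>\<pi>s. is_realizer P le 2 \<pi>s" and "P \<noteq> {}"
proof -
  have "\<exists>d \<pi>s. is_realizer P le d \<pi>s" by (rule realizer_exists[OF po])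
  hence "\<exists>\<pi>s. is_realizer P le (poset_dim P le) \<pi>s" unfolding poset_dim_def by (rule LeastI_ex)
  thus "\<exists>\<pi>s. is_realizer P le 2 \<pi>s" using d by simp
  show "P \<noteq> {}"
  proof
    assume "P = {}"
    hence "is_realizer P le 0 (\<lambda>_ _. 0)" unfolding is_realizer_def by simp
    hence "poset_dim P le \<le> 0" unfolding poset_dim_def by (intro Least_le) blast
    thus False using d by simp
  qed
qed



lemma grid_le_antisym: "grid_le x y \<Longrightarrow> grid_le y x \<Longrightarrow> x = y"
  unfolding grid_le_def by (simp add: prod_eq_iff)

lemma grid_le_refl: "grid_le x x"
  unfolding grid_le_def by simp

lemma embed_from_contains:
  assumes po: "finite_poset P le" and R: "is_realizer P le 2 \<pi>s"
    and c: "contains ((\<lambda>p. (\<pi>s 0 p, \<pi>s 1 p)) ` P) F"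
  shows "strong_subposet P le F"
proof -
  have refl: "\<forall>p\<in>P. le p p" using po unfolding finite_poset_def by blast
  have b0: "bij_betw (\<pi>s 0) P {0..<card P}" and b1: "bij_betw (\<pi>s 1) P {0..<card P}"
    using R unfolding is_realizer_def by auto
  have rel: "(le p q \<and> p \<noteq> q) = (\<pi>s 0 p < \<pi>s 0 q \<and> \<pi>s 1 p < \<pi>s 1 q)" if "p \<in> P" "q \<in> P" for p q
  proof -
    have "(le p q \<and> p \<noteq> q) = (\<forall>i<2. \<pi>s i p < \<pi>s i q)" using R that unfolding is_realizer_def by blast
    also have "\<dots> = (\<pi>s 0 p < \<pi>s 0 q \<and> \<pi>s 1 p < \<pi>s 1 q)"
      by (auto simp: less_2_cases_iff)
    finally show ?thesis .
  qed
  have ne0: "\<pi>s 0 p \<noteq> \<pi>s 0 q" and ne1: "\<pi>s 1 p \<noteq> \<pi>s 1 q" if "p \<in> P" "q \<in> P" "p \<noteq> q" for p q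
    using b0 b1 that unfolding bij_betw_def inj_on_def by blast+
  define Pi where "Pi = (\<lambda>p. (\<pi>s 0 p, \<pi>s 1 p)) ` P"
  obtain \<phi> where h: "\<phi> ` Pi \<subseteq> F" "\<forall>u\<in>Pi. \<forall>v\<in>Pi.
   (fst u < fst v \<longrightarrow> fst (\<phi> u) < fst (\<phi> v)) \<and> (snd u < snd v \<longrightarrow> snd (\<phi> u) < snd (\<phi> v))"
    using c unfolding contains_def Pi_def by blast
  define f where "f p = \<phi> (\<pi>s 0 p, \<pi>s 1 p)" for p
  have m0: "fst (f p) < fst (f q)" if "p \<in> P" "q \<in> P" "\<pi>s 0 p < \<pi>s 0 q" for p q
    using h(2) that unfolding f_def Pi_def by force
  have m1: "snd (f p) < snd (f q)" if "p \<in> P" "q \<in> P" "\<pi>s 1 p < \<pi>s 1 q" for p q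
    using h(2) that unfolding f_def Pi_def by force
  show ?thesis unfolding strong_subposet_def
  proof (intro exI conjI ballI)
    show "inj_on f P"
    proof (rule inj_onI)
      fix p q assume pq: "p \<in> P" "q \<in> P" "f p = f q"
      show "p = q"
      proof (rule ccontr)
        assume "p \<noteq> q"
        hence "\<pi>s 0 p < \<pi>s 0 q \<or> \<pi>s 0 q < \<pi>s 0 p" using ne0 pq by fastforce
        thus False using m0 pq by fastforce
      qed
    qed
    show "f ` P \<subseteq> F" using h(1) unfolding f_def Pi_def by auto
    fix p q assume pq: "p \<in> P" "q \<in> P"
    show "le p q = grid_le (f p) (f q)"
    proof (cases "p = q")
      case True thus ?thesis using refl pq grid_le_refl by simp
    next
      case False
      show ?thesis
      proof
        assume "le p q"
        hence "\<pi>s 0 p < \<pi>s 0 q \<and> \<pi>s 1 p < \<pi>s 1 q" using rel pq False by blast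
        thus "grid_le (f p) (f q)" unfolding grid_le_def using m0 m1 pq by (auto intro: less_imp_le)
      next
        assume g: "grid_le (f p) (f q)"
        have "\<pi>s 0 p < \<pi>s 0 q"
        proof (rule ccontr)
          assume "\<not> ?thesis"
          hence "\<pi>s 0 q < \<pi>s 0 p" using ne0[OF pq False] by simp
          hence "fst (f q) < fst (f p)" using m0 pq by blast
          thus False using g unfolding grid_le_def by simp
        qed
        moreover have "\<pi>s 1 p < \<pi>s 1 q"
        proof (rule ccontr)
          assume "\<not> ?thesis"
          hence "\<pi>s 1 q < \<pi>s 1 p" using ne1[OF pq False] by simp
          hence "snd (f q) < snd (f p)" using m1 pq by blast
          thus False using g unfolding grid_le_def by simp
        qed
        ultimately show "le p q" using rel pq by blast
      qed
    qed
  qed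
qed

lemma linear_bound:
  assumes po: "finite_poset P le" and R: "is_realizer P le 2 \<pi>s" and ne: "P \<noteq> {}"
  shows "\<exists>C. \<forall>k F. F \<subseteq> grid k \<longrightarrow> \<not> strong_subposet P le F \<longrightarrow> card F \<le> C*(k+1)"
proof -
  have fin: "finite P" using po unfolding finite_poset_def by blast
  define Pi where "Pi = (\<lambda>p. (\<pi>s 0 p, \<pi>s 1 p)) ` P"
  have b0: "bij_betw (\<pi>s 0) P {0..<card P}" and b1: "bij_betw (\<pi>s 1) P {0..<card P}"
    using R unfolding is_realizer_def by auto
  have Pis: "Pi \<subseteq> {..<card P}\<times>{..<card P}" unfolding Pi_def using b0 b1 bij_betwE by fastforce
  have n: "1 \<le> card P" using fin ne by (simp add: Suc_leI card_gt_0_iff)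
  obtain C where C: "\<forall>K F. F \<subseteq> {..<K}\<times>{..<K} \<longrightarrow> \<not> contains Pi F \<longrightarrow> card F \<le> C*K"
    using marcus_tardos[OF Pis n] by blast
  have "\<forall>k F. F \<subseteq> grid k \<longrightarrow> \<not> strong_subposet P le F \<longrightarrow> card F \<le> C*(k+1)"
  proof (intro allI impI)
    fix k F assume Fs: "F \<subseteq> grid k" and nss: "\<not> strong_subposet P le F"
    have "\<not> contains Pi F" using embed_from_contains[OF po R] nss unfolding Pi_def by blast
    moreover have "F \<subseteq> {..<k+1}\<times>{..<k+1}" using Fs unfolding grid_def by auto
    ultimately show "card F \<le> C*(k+1)" using C by blast
  qed
  thus ?thesis by blast
qed

lemma saturated_exists:
  assumes ne: "P \<noteq> {}"
  shows "\<exists>F. strong_saturated (grid k) P le F"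
proof -
  define S where "S = {F. F \<subseteq> grid k \<and> \<not> strong_subposet P le F}"
  have fing: "finite (grid k)" unfolding grid_def by simp
  have finS: "finite S" unfolding S_def using fing by (simp add: finite_subset)
  have eS: "{} \<in> S" unfolding S_def strong_subposet_def using ne by auto
  define c where "c = Max (card ` S)"
  have "c \<in> card ` S" unfolding c_def using finS eS by (intro Max_in) auto
  then obtain F where F: "F \<in> S" "card F = c" by blast
  have mx: "card G \<le> c" if "G \<in> S" for G unfolding c_def using finS that by (intro Max_ge) auto
  have "strong_saturated (grid k) P le F" unfolding strong_saturated_def
  proof (intro conjI ballI)
    show "F \<subseteq> grid k" "\<not> strong_subposet P le F" using F(1) unfolding S_def by auto
    fix x assume x: "x \<in> grid k - F"
    show "strong_subposet P le (insert x F)"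
    proof (rule ccontr)
      assume "\<not> ?thesis"
      hence "insert x F \<in> S" using x F(1) unfolding S_def by auto
      hence "card (insert x F) \<le> c" by (rule mx)
      moreover have "finite F" using F(1) fing unfolding S_def by (auto intro: finite_subset)
      ultimately show False using x F(2) by simp
    qed
  qed
  thus ?thesis by blast
qed

lemma sat_star_props:
  assumes ne: "P \<noteq> {}"
  shows "\<exists>F. strong_saturated (grid k) P le F \<and> card F = sat_star k P le"
    and "strong_saturated (grid k) P le F \<Longrightarrow> sat_star k P le \<le> card F"
proof -
  obtain F0 where "strong_saturated (grid k) P le F0" using saturated_exists[OF ne] by blast
  hence "\<exists>n F. strong_saturated (grid k) P le F \<and> card F = n" by blast
  thus "\<exists>F. strong_saturated (grid k) P le F \<and> card F = sat_star k P le"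
    unfolding sat_star_def by (rule LeastI_ex)
  show "strong_saturated (grid k) P le F \<Longrightarrow> sat_star k P le \<le> card F"
    unfolding sat_star_def by (rule Least_le) blast
qed



definition str :: "nat \<Rightarrow> nat \<Rightarrow> nat \<Rightarrow> nat" where
  "str a s r = (if r < a then r else r + s)"
definition col :: "nat \<Rightarrow> nat \<Rightarrow> nat \<Rightarrow> nat" where
  "col a s r = (if r < a then r else if r \<le> a + s then a else r - s)"

lemma oneD:
  assumes "r0 \<noteq> a"
  shows "(str a s r0 \<le> r) = (r0 \<le> col a s r)"
    "(r \<le> str a s r0) = (col a s r \<le> r0)"
    "col a s (str a s r0) = r0"
  using assms unfolding str_def col_def by auto

lemma str_range: "1 \<le> r0 \<Longrightarrow> r0 \<le> k0 \<Longrightarrow> 1 \<le> str a s r0 \<and> str a s r0 \<le> k0 + s"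
  unfolding str_def by auto

lemma col_range: "1 \<le> r \<Longrightarrow> r \<le> k0 + s \<Longrightarrow> 1 \<le> a \<Longrightarrow> a \<le> k0 \<Longrightarrow> 1 \<le> col a s r \<and> col a s r \<le> k0"
  unfolding col_def by auto

lemma stretch:
  assumes sat: "strong_saturated (grid k0) P le F0"
    and a: "a \<in> {1..k0}" "a \<notin> fst ` F0" and b: "b \<in> {1..k0}" "b \<notin> snd ` F0"
    and m: "k0 \<le> m"
  shows "\<exists>F. strong_saturated (grid m) P le F \<and> card F = card F0"
proof -
  define s where "s = m - k0"
  have ms: "m = k0 + s" unfolding s_def using m by simp
  define \<Phi> where "\<Phi> y = (str a s (fst y), str b s (snd y))" for y
  define Kc where "Kc x = (col a s (fst x), col b s (snd x))" for x
  have F0g: "F0 \<subseteq> grid k0" and nss: "\<not> strong_subposet P le F0"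
    and satx: "\<forall>x\<in>grid k0 - F0. strong_subposet P le (insert x F0)"
    using sat unfolding strong_saturated_def by auto
  have ya: "fst y \<noteq> a" "snd y \<noteq> b" if "y \<in> F0" for y using a b that by force+
  have KP: "Kc (\<Phi> y) = y" if "y \<in> F0" for y
    unfolding Kc_def \<Phi>_def using oneD(3)[OF ya(1)[OF that]] oneD(3)[OF ya(2)[OF that]] by simp
  have le1: "grid_le (\<Phi> y) x = grid_le y (Kc x)" if "y \<in> F0" for x y
    unfolding grid_le_def \<Phi>_def Kc_def using oneD(1)[OF ya(1)[OF that]] oneD(1)[OF ya(2)[OF that]] by simp
  have le2: "grid_le x (\<Phi> y) = grid_le (Kc x) y" if "y \<in> F0" for x y
    unfolding grid_le_def \<Phi>_def Kc_def using oneD(2)[OF ya(1)[OF that]] oneD(2)[OF ya(2)[OF that]] by simp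
  have le3: "grid_le (\<Phi> y) (\<Phi> y') = grid_le y y'" if "y \<in> F0" "y' \<in> F0" for y y'
    using le1[OF that(1), of "\<Phi> y'"] KP[OF that(2)] by simp
  have injP: "inj_on \<Phi> F0" by (rule inj_on_inverseI[where g=Kc]) (rule KP)
  define F where "F = \<Phi> ` F0"
  have cardF: "card F = card F0" unfolding F_def by (rule card_image[OF injP])
  have Fg: "F \<subseteq> grid m"
  proof
    fix x assume "x \<in> F"
    then obtain y where y: "y \<in> F0" "x = \<Phi> y" unfolding F_def by blast
    have "y \<in> grid k0" using y F0g by blast
    hence "1 \<le> fst y" "fst y \<le> k0" "1 \<le> snd y" "snd y \<le> k0" unfolding grid_def by (simp_all add: mem_Times_iff)
    hence "1 \<le> str a s (fst y) \<and> str a s (fst y) \<le> k0 + s" "1 \<le> str b s (snd y) \<and> str b s (snd y) \<le> k0 + s"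
      using str_range by blast+
    thus "x \<in> grid m" unfolding y(2) \<Phi>_def grid_def ms by (simp add: mem_Times_iff)
  qed
  have Kg: "Kc x \<in> grid k0" if "x \<in> grid m" for x
  proof -
    have "1 \<le> fst x" "fst x \<le> k0+s" "1 \<le> snd x" "snd x \<le> k0+s"
      using that unfolding grid_def ms by (simp_all add: mem_Times_iff)
    moreover have "1 \<le> a" "a \<le> k0" "1 \<le> b" "b \<le> k0" using a(1) b(1) by auto
    ultimately have "1 \<le> col a s (fst x) \<and> col a s (fst x) \<le> k0" "1 \<le> col b s (snd x) \<and> col b s (snd x) \<le> k0"
      using col_range by blast+
    thus ?thesis unfolding Kc_def grid_def by (simp add: mem_Times_iff)
  qed
  have nssF: "\<not> strong_subposet P le F"
  proof
    assume "strong_subposet P le F"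
    then obtain g where g: "inj_on g P" "g ` P \<subseteq> F" "\<forall>p\<in>P. \<forall>p'\<in>P. le p p' = grid_le (g p) (g p')"
      unfolding strong_subposet_def by blast
    have gF: "Kc (g p) \<in> F0" "\<Phi> (Kc (g p)) = g p" if "p \<in> P" for p
    proof -
      have "g p \<in> \<Phi> ` F0" using g(2) that unfolding F_def by blast
      then obtain y where y: "y \<in> F0" "g p = \<Phi> y" by blast
      have "Kc (g p) = y" using y(2) KP[OF y(1)] by simp
      thus "Kc (g p) \<in> F0" "\<Phi> (Kc (g p)) = g p" using y by simp_all
    qed
    have "strong_subposet P le F0" unfolding strong_subposet_def
    proof (intro exI[of _ "Kc \<circ> g"] conjI ballI)
      show "inj_on (Kc \<circ> g) P"
      proof (rule inj_onI)
        fix p q assume "p \<in> P" "q \<in> P" "(Kc \<circ> g) p = (Kc \<circ> g) q"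
        hence "Kc (g p) = Kc (g q)" by simp
        hence "\<Phi> (Kc (g p)) = \<Phi> (Kc (g q))" by simp
        hence "g p = g q" using gF(2)[OF \<open>p\<in>P\<close>] gF(2)[OF \<open>q\<in>P\<close>] by simp
        thus "p = q" using g(1) \<open>p\<in>P\<close> \<open>q\<in>P\<close> by (simp add: inj_on_def)
      qed
      show "(Kc \<circ> g) ` P \<subseteq> F0" using gF by auto
      fix p q assume pq: "p \<in> P" "q \<in> P"
      have "le p q = grid_le (g p) (g q)" using g(3) pq by blast
      also have "\<dots> = grid_le (\<Phi> (Kc (g p))) (\<Phi> (Kc (g q)))" using gF(2)[OF pq(1)] gF(2)[OF pq(2)] by simp
      also have "\<dots> = grid_le (Kc (g p)) (Kc (g q))" by (rule le3[OF gF(1)[OF pq(1)] gF(1)[OF pq(2)]])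
      finally show "le p q = grid_le ((Kc \<circ> g) p) ((Kc \<circ> g) q)" by simp
    qed
    with nss show False by simp
  qed
  have satF: "strong_subposet P le (insert x F)" if x: "x \<in> grid m - F" for x
  proof -
    have KxF0: "Kc x \<notin> F0"
    proof
      assume y: "Kc x \<in> F0"
      have "grid_le (\<Phi> (Kc x)) x" using le1[OF y] grid_le_refl by simp
      moreover have "grid_le x (\<Phi> (Kc x))" using le2[OF y] grid_le_refl by simp
      ultimately have "x = \<Phi> (Kc x)" using grid_le_antisym by blast
      thus False using x y unfolding F_def by blast
    qed
    hence "Kc x \<in> grid k0 - F0" using Kg x by blast
    hence "strong_subposet P le (insert (Kc x) F0)" using satx by blast
    then obtain g where g: "inj_on g P" "g ` P \<subseteq> insert (Kc x) F0"
        "\<forall>p\<in>P. \<forall>p'\<in>P. le p p' = grid_le (g p) (g p')"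
      unfolding strong_subposet_def by blast
    define h where "h p = (if g p = Kc x then x else \<Phi> (g p))" for p
    have hF: "g p \<in> F0" "h p = \<Phi> (g p)" if "p \<in> P" "g p \<noteq> Kc x" for p
      using g(2) that unfolding h_def by auto
    have xnF: "x \<notin> F" using x by blast
    have ord: "grid_le (g p) (g q) = grid_le (h p) (h q)" if pq: "p \<in> P" "q \<in> P" for p q
    proof (cases "g p = Kc x")
      case True
      show ?thesis
      proof (cases "g q = Kc x")
        case True
        thus ?thesis using \<open>g p = Kc x\<close> grid_le_refl unfolding h_def by simp
      next
        case False
        thus ?thesis using True hF[OF pq(2) False] le2 unfolding h_def by simp
      qed
    next
      case False
      show ?thesis
      proof (cases "g q = Kc x")
        case True
        thus ?thesis using False hF[OF pq(1) False] le1 unfolding h_def by simp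
      next
        case F2: False
        thus ?thesis using False hF[OF pq(1) False] hF[OF pq(2) F2] le3 by simp
      qed
    qed
    show ?thesis unfolding strong_subposet_def
    proof (intro exI[of _ h] conjI ballI)
      show "inj_on h P"
      proof (rule inj_onI)
        fix p q assume pq: "p \<in> P" "q \<in> P" "h p = h q"
        show "p = q"
        proof (rule ccontr)
          assume "p \<noteq> q"
          hence gne: "g p \<noteq> g q" using g(1) pq by (auto simp: inj_on_def)
          show False
          proof (cases "g p = Kc x")
            case True
            hence "g q \<noteq> Kc x" using gne by simp
            hence "h q \<in> F" using hF[OF pq(2)] unfolding F_def by auto
            thus False using True pq(3) xnF unfolding h_def by simp
          next
            case False
            show False
            proof (cases "g q = Kc x")
              case True
              have "h p \<in> F" using hF[OF pq(1) False] unfolding F_def by auto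
              thus False using True pq(3) xnF unfolding h_def by simp
            next
              case F2: False
              have "\<Phi> (g p) = \<Phi> (g q)" using pq(3) hF[OF pq(1) False] hF[OF pq(2) F2] by simp
              thus False using injP hF[OF pq(1) False] hF[OF pq(2) F2] gne by (auto simp: inj_on_def)
            qed
          qed
        qed
      qed
      show "h ` P \<subseteq> insert x F"
        using hF unfolding h_def F_def by auto
      fix p q assume pq: "p \<in> P" "q \<in> P"
      show "le p q = grid_le (h p) (h q)" using g(3) pq ord by simp
    qed
  qed
  have "strong_saturated (grid m) P le F" unfolding strong_saturated_def
    using Fg nssF satF by blast
  thus ?thesis using cardF by blast
qed



lemma missing_coord:
  assumes "card (f ` F0) < k0" "finite F0"
  shows "\<exists>a. a \<in> {1..k0} \<and> a \<notin> f ` F0"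
proof (rule ccontr)
  assume "\<not> ?thesis"
  hence "{1..k0} \<subseteq> f ` F0" by blast
  hence "card {1..k0} \<le> card (f ` F0)" using assms(2) by (intro card_mono) auto
  thus False using assms(1) by simp
qed

theorem theorem1p8:
  fixes P :: "'a set" and le :: "'a \<Rightarrow> 'a \<Rightarrow> bool"
  assumes "finite_poset P le" and "poset_dim P le = 2"
  shows "(\<lambda>k. real (sat_star k P le)) \<in> O(\<lambda>_. 1)
       \<or> (\<lambda>k. real (sat_star k P le)) \<in> \<Theta>(\<lambda>k. real k)"
proof -
  note po = assms(1)
  obtain \<pi>s where R: "is_realizer P le 2 \<pi>s" using dim2_realizer[OF assms] by blast
  have ne: "P \<noteq> {}" using dim2_realizer[OF assms] by blast
  obtain C where C: "\<forall>k F. F \<subseteq> grid k \<longrightarrow> \<not> strong_subposet P le F \<longrightarrow> card F \<le> C*(k+1)"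
    using linear_bound[OF po R ne] by blast
  have up: "sat_star k P le \<le> C*(k+1)" for k
  proof -
    obtain F where F: "strong_saturated (grid k) P le F" "card F = sat_star k P le"
      using sat_star_props(1)[OF ne] by blast
    hence "F \<subseteq> grid k" "\<not> strong_subposet P le F" unfolding strong_saturated_def by auto
    thus ?thesis using C F(2) by metis
  qed
  show ?thesis
  proof (cases "\<exists>k0. sat_star k0 P le < k0")
    case True
    then obtain k0 where k0: "sat_star k0 P le < k0" by blast
    obtain F0 where F0: "strong_saturated (grid k0) P le F0" "card F0 = sat_star k0 P le"
      using sat_star_props(1)[OF ne] by blast
    have F0g: "F0 \<subseteq> grid k0" using F0(1) unfolding strong_saturated_def by auto
    have finF0: "finite F0" using F0g finite_subset unfolding grid_def by blast
    have "card (fst ` F0) < k0" using card_image_le[OF finF0, of fst] F0(2) k0 by linarith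
    then obtain a where a: "a \<in> {1..k0}" "a \<notin> fst ` F0" using missing_coord finF0 by blast
    have "card (snd ` F0) < k0" using card_image_le[OF finF0, of snd] F0(2) k0 by linarith
    then obtain b where b: "b \<in> {1..k0}" "b \<notin> snd ` F0" using missing_coord finF0 by blast
    have bd: "sat_star m P le \<le> card F0" if km: "k0 \<le> m" for m
    proof -
      obtain F where "strong_saturated (grid m) P le F" "card F = card F0"
        using stretch[OF F0(1) a b km] by blast
      thus ?thesis using sat_star_props(2)[OF ne] by metis
    qed
    have "(\<lambda>k. real (sat_star k P le)) \<in> O(\<lambda>_. 1)"
    proof (rule bigoI[where c="real (card F0)"])
      show "\<forall>\<^sub>F x in at_top. norm (real (sat_star x P le)) \<le> real (card F0) * norm (1::real)"
        using eventually_ge_at_top[of k0] by eventually_elim (use bd in simp)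
    qed
    thus ?thesis by blast
  next
    case False
    hence lo: "k \<le> sat_star k P le" for k by (meson not_less)
    have ev: "\<forall>\<^sub>F x in at_top. 1 * norm (real x) \<le> norm (real (sat_star x P le)) \<and>
              norm (real (sat_star x P le)) \<le> real (2*C+1) * norm (real x)"
      using eventually_ge_at_top[of "1::nat"]
    proof eventually_elim
      case (elim k)
      have "C \<le> C*k" using elim by simp
      moreover have "C*(k+1) = C*k + C" "(2*C+1)*k = 2*(C*k) + k" by (simp_all add: algebra_simps)
      ultimately have "C*(k+1) \<le> (2*C+1)*k" by linarith
      hence "sat_star k P le \<le> (2*C+1)*k" using up[of k] by linarith
      hence "real (sat_star k P le) \<le> real (2*C+1) * real k" by (metis of_nat_le_iff of_nat_mult)
      moreover have "real k \<le> real (sat_star k P le)" using lo[of k] by simp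
      ultimately show ?case by simp
    qed
    have "(\<lambda>k. real (sat_star k P le)) \<in> \<Theta>(\<lambda>k. real k)"
      by (rule bigthetaI'[OF _ _ ev]) simp_all
    thus ?thesis by blast
  qed
qed

end
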